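(* Let $D$ be a set of pairwise intersecting closed disks in the plane. Let $D'$ be the set of disks obtained from $D$ by multiplying the radius of each disk by $2/\sqrt{3}$ while keeping its center. Then all disks in $D'$ have a common point. Moreover, the factor $2/\sqrt{3}$ is tight: for every $\lambda<2/\sqrt{3}$ there exists a set of pairwise intersecting closed disks such that the disks obtained by multiplying their radii by $\lambda$ (keeping centers) have no common point.
   Context: Two disks intersect if they have at least one common point (touching counts as intersecting). *)

theory Defs
  imports "HOL-Analysis.Analysis"
begin

type_synonym disk = "(real^2) \<times> real"

definition disk_set :: "disk \<Rightarrow> (real^2) set" where
  "disk_set d = cball (fst d) (snd d)"

definition valid_disks :: "disk set \<Rightarrow> bool" where
  "valid_disks D \<longleftrightarrow> (\<forall>d\<in>D. snd d > 0)"

definition pairwise_intersecting :: "disk set \<Rightarrow> bool" where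
  "pairwise_intersecting D \<longleftrightarrow> (\<forall>d1\<in>D. \<forall>d2\<in>D. disk_set d1 \<inter> disk_set d2 \<noteq> {})"

definition scale_disk :: "real \<Rightarrow> disk \<Rightarrow> disk" where
  "scale_disk k d = (fst d, k * snd d)"

definition has_common_point :: "disk set \<Rightarrow> bool" where
  "has_common_point D \<longleftrightarrow> (\<exists>p. \<forall>d\<in>D. p \<in> disk_set d)"

end

theory Submission
  imports Defs
begin

lemma pert:
  fixes p c :: "'a::real_inner"
  assumes H: "\<forall>t\<in>{0..1}. (1-t)*A + t*a - inner ((1-t)*\<^sub>R p + t*\<^sub>R c) ((1-t)*\<^sub>R p + t*\<^sub>R c) \<le> A - inner p p"
  shows "inner (p-c) (p-c) - inner c c + a \<le> A - inner p p"
proof (rule ccontr)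
  define q where "q = c - p"
  define M where "M = inner q q"
  define \<delta> where "\<delta> = (inner (p-c) (p-c) - inner c c + a) - (A - inner p p)"
  assume "\<not> ?thesis"
  then have dpos: "\<delta> > 0" unfolding \<delta>_def by simp
  have M0: "M \<ge> 0" unfolding M_def by simp
  have eq: "(1-t)*A + t*a - inner ((1-t)*\<^sub>R p + t*\<^sub>R c) ((1-t)*\<^sub>R p + t*\<^sub>R c) - (A - inner p p)
      = t*\<delta> - t^2*M" for t
  proof -
    have "(1-t)*\<^sub>R p + t*\<^sub>R c = p + t *\<^sub>R q" unfolding q_def by (simp add: algebra_simps)
    moreover have "c = p + q" unfolding q_def by simp
    ultimately show ?thesis unfolding \<delta>_def M_def
      by (simp add: inner_add_left inner_add_right inner_diff_left inner_diff_right inner_commute algebra_simps power2_eq_square)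
  qed
  define t where "t = \<delta> / (\<delta> + M)"
  have t01: "t \<in> {0..1}" unfolding t_def using dpos M0 by auto
  have tpos: "t > 0" unfolding t_def using dpos M0 by auto
  have "\<delta> - t*M = \<delta>^2/(\<delta>+M)" unfolding t_def using dpos M0 by (simp add: field_simps power2_eq_square)
  also have "... > 0" using dpos M0 by simp
  finally have "t*\<delta> - t^2*M > 0" using tpos
    by (metis diff_gt_0_iff_gt mult.assoc mult_less_cancel_left_pos power2_eq_square right_diff_distrib)
  with H[rule_format, OF t01] eq[of t] show False by linarith
qed

lemma S_mem:
  "(x::real\<times>real\<times>real) \<in> convex hull {(1,0,0),(0,1,0),(0,0,1)} \<longleftrightarrow>
     fst x \<ge> 0 \<and> fst (snd x) \<ge> 0 \<and> snd (snd x) \<ge> 0 \<and> fst x + fst (snd x) + snd (snd x) = 1"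
  unfolding convex_hull_3 by (cases x) auto


definition Hfun :: "real^2 \<Rightarrow> real^2 \<Rightarrow> real^2 \<Rightarrow> real \<Rightarrow> real \<Rightarrow> real \<Rightarrow> real\<times>real\<times>real \<Rightarrow> real" where
  "Hfun c1 c2 c3 a1 a2 a3 x = fst x * a1 + fst (snd x) * a2 + snd (snd x) * a3
     - inner (fst x *\<^sub>R c1 + fst (snd x) *\<^sub>R c2 + snd (snd x) *\<^sub>R c3) (fst x *\<^sub>R c1 + fst (snd x) *\<^sub>R c2 + snd (snd x) *\<^sub>R c3)"

lemma common3:
  fixes c1 c2 c3 :: "real^2"
  assumes Hle: "\<And>u v w. u \<ge> 0 \<Longrightarrow> v \<ge> 0 \<Longrightarrow> w \<ge> 0 \<Longrightarrow> u+v+w = 1 \<Longrightarrow>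
     Hfun c1 c2 c3 (inner c1 c1 - Q1) (inner c2 c2 - Q2) (inner c3 c3 - Q3) (u,v,w) \<le> 0"
  shows "\<exists>p. inner (p-c1) (p-c1) \<le> Q1 \<and> inner (p-c2) (p-c2) \<le> Q2 \<and> inner (p-c3) (p-c3) \<le> Q3"
proof -
  define a1 where "a1 = inner c1 c1 - Q1"
  define a2 where "a2 = inner c2 c2 - Q2"
  define a3 where "a3 = inner c3 c3 - Q3"
  define S where "S = convex hull {(1::real,0::real,0::real),(0,1,0),(0,0,1)}"
  have cS: "compact S" unfolding S_def by (rule compact_convex_hull) simp
  have neS: "S \<noteq> {}" unfolding S_def by simp
  have cont: "continuous_on S (Hfun c1 c2 c3 a1 a2 a3)"
    unfolding Hfun_def by (intro continuous_intros)
  obtain x where xS: "x \<in> S" and xmax: "\<And>y. y \<in> S \<Longrightarrow> Hfun c1 c2 c3 a1 a2 a3 y \<le> Hfun c1 c2 c3 a1 a2 a3 x"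
    using continuous_attains_sup[OF cS neS cont] by blast
  obtain u v w where x: "x = (u,v,w)" by (cases x) auto
  have uvw: "u \<ge> 0" "v \<ge> 0" "w \<ge> 0" "u+v+w = 1" using xS unfolding S_def S_mem x by auto
  define p where "p = u *\<^sub>R c1 + v *\<^sub>R c2 + w *\<^sub>R c3"
  define A where "A = u * a1 + v * a2 + w * a3"
  have Hx: "Hfun c1 c2 c3 a1 a2 a3 x = A - inner p p" unfolding Hfun_def x A_def p_def by simp
  have Hx0: "Hfun c1 c2 c3 a1 a2 a3 x \<le> 0" using Hle[OF uvw] unfolding x a1_def a2_def a3_def .
  have memS: "(a,b,c) \<in> S" if "a \<ge> 0" "b \<ge> 0" "c\<ge>0" "a+b+c=1" for a b c
    unfolding S_def S_mem using that by simp
  have t1: "(1-t) * u + t \<ge> 0" "(1-t) * v \<ge> 0" "(1-t) * w \<ge> 0" "(1-t) * v + t \<ge> 0" "(1-t) * w + t \<ge> 0"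
    "(1-t) * u \<ge> 0" if "t \<in> {0..1}" for t using that uvw by auto
  have sumt: "t * u + (t * v + t * w) = t" for t
    using uvw(4) by (metis distrib_left add.assoc mult.right_neutral)
  have "inner (p-c1) (p-c1) - inner c1 c1 + a1 \<le> A - inner p p"
  proof (rule pert, intro ballI)
    fix t :: real assume t: "t \<in> {0..1}"
    have "((1-t) * u + t, (1-t) * v, (1-t) * w) \<in> S" using t1[OF t] uvw by (intro memS) (auto simp: algebra_simps sumt)
    from xmax[OF this] have "Hfun c1 c2 c3 a1 a2 a3 ((1-t) * u + t, (1-t) * v, (1-t) * w) \<le> A - inner p p" using Hx by simp
    moreover have "Hfun c1 c2 c3 a1 a2 a3 ((1-t) * u + t, (1-t) * v, (1-t) * w) = (1-t)*A + t*a1 - inner ((1-t)*\<^sub>R p + t*\<^sub>R c1) ((1-t)*\<^sub>R p + t*\<^sub>R c1)"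
    proof -
      have "((1-t) * u + t) *\<^sub>R c1 + ((1-t) * v) *\<^sub>R c2 + ((1-t) * w) *\<^sub>R c3 = (1-t)*\<^sub>R p + t*\<^sub>R c1"
        unfolding p_def by (simp add: algebra_simps)
      moreover have "((1-t) * u + t) * a1 + ((1-t) * v) * a2 + ((1-t) * w) * a3 = (1-t) * A + t * a1" unfolding A_def by (simp add: algebra_simps)
      ultimately show ?thesis unfolding Hfun_def fst_conv snd_conv by metis
    qed
    ultimately show "(1-t)*A + t*a1 - inner ((1-t)*\<^sub>R p + t*\<^sub>R c1) ((1-t)*\<^sub>R p + t*\<^sub>R c1) \<le> A - inner p p" by simp
  qed
  then have g1: "inner (p-c1) (p-c1) \<le> Q1" using Hx Hx0 unfolding a1_def by simp
  have "inner (p-c2) (p-c2) - inner c2 c2 + a2 \<le> A - inner p p"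
  proof (rule pert, intro ballI)
    fix t :: real assume t: "t \<in> {0..1}"
    have "((1-t) * u, (1-t) * v + t, (1-t) * w) \<in> S" using t1[OF t] uvw by (intro memS) (auto simp: algebra_simps sumt)
    from xmax[OF this] have "Hfun c1 c2 c3 a1 a2 a3 ((1-t) * u, (1-t) * v + t, (1-t) * w) \<le> A - inner p p" using Hx by simp
    moreover have "Hfun c1 c2 c3 a1 a2 a3 ((1-t) * u, (1-t) * v + t, (1-t) * w) = (1-t)*A + t*a2 - inner ((1-t)*\<^sub>R p + t*\<^sub>R c2) ((1-t)*\<^sub>R p + t*\<^sub>R c2)"
    proof -
      have "((1-t) * u) *\<^sub>R c1 + ((1-t) * v + t) *\<^sub>R c2 + ((1-t) * w) *\<^sub>R c3 = (1-t)*\<^sub>R p + t*\<^sub>R c2"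
        unfolding p_def by (simp add: algebra_simps)
      moreover have "((1-t) * u) * a1 + ((1-t) * v + t) * a2 + ((1-t) * w) * a3 = (1-t) * A + t * a2" unfolding A_def by (simp add: algebra_simps)
      ultimately show ?thesis unfolding Hfun_def fst_conv snd_conv by metis
    qed
    ultimately show "(1-t)*A + t*a2 - inner ((1-t)*\<^sub>R p + t*\<^sub>R c2) ((1-t)*\<^sub>R p + t*\<^sub>R c2) \<le> A - inner p p" by simp
  qed
  then have g2: "inner (p-c2) (p-c2) \<le> Q2" using Hx Hx0 unfolding a2_def by simp
  have "inner (p-c3) (p-c3) - inner c3 c3 + a3 \<le> A - inner p p"
  proof (rule pert, intro ballI)
    fix t :: real assume t: "t \<in> {0..1}"
    have "((1-t) * u, (1-t) * v, (1-t) * w + t) \<in> S" using t1[OF t] uvw by (intro memS) (auto simp: algebra_simps sumt)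
    from xmax[OF this] have "Hfun c1 c2 c3 a1 a2 a3 ((1-t) * u, (1-t) * v, (1-t) * w + t) \<le> A - inner p p" using Hx by simp
    moreover have "Hfun c1 c2 c3 a1 a2 a3 ((1-t) * u, (1-t) * v, (1-t) * w + t) = (1-t)*A + t*a3 - inner ((1-t)*\<^sub>R p + t*\<^sub>R c3) ((1-t)*\<^sub>R p + t*\<^sub>R c3)"
    proof -
      have "((1-t) * u) *\<^sub>R c1 + ((1-t) * v) *\<^sub>R c2 + ((1-t) * w + t) *\<^sub>R c3 = (1-t)*\<^sub>R p + t*\<^sub>R c3"
        unfolding p_def by (simp add: algebra_simps)
      moreover have "((1-t) * u) * a1 + ((1-t) * v) * a2 + ((1-t) * w + t) * a3 = (1-t) * A + t * a3" unfolding A_def by (simp add: algebra_simps)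
      ultimately show ?thesis unfolding Hfun_def fst_conv snd_conv by metis
    qed
    ultimately show "(1-t)*A + t*a3 - inner ((1-t)*\<^sub>R p + t*\<^sub>R c3) ((1-t)*\<^sub>R p + t*\<^sub>R c3) \<le> A - inner p p" by simp
  qed
  then have g3: "inner (p-c3) (p-c3) \<le> Q3" using Hx Hx0 unfolding a3_def by simp
  show ?thesis using g1 g2 g3 by blast
qed


lemma Hfun_eq:
  fixes c1 c2 c3 :: "real^2"
  assumes "u + v + w = 1"
  shows "Hfun c1 c2 c3 (inner c1 c1 - Q1) (inner c2 c2 - Q2) (inner c3 c3 - Q3) (u,v,w)
    = u * v * inner (c1-c2) (c1-c2) + u * w * inner (c1-c3) (c1-c3) + v * w * inner (c2-c3) (c2-c3)
      - (u * Q1 + v * Q2 + w * Q3)"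
proof -
  have w: "w = 1 - u - v" using assms by simp
  show ?thesis unfolding Hfun_def w
    by (simp add: inner_add_left inner_add_right inner_diff_left inner_diff_right inner_commute algebra_simps)
qed

lemma poly_ineq:
  fixes u v w x y z :: real
  assumes "u \<ge> 0" "v \<ge> 0" "w \<ge> 0" "u+v+w = 1"
  shows "u * v * (x+y)^2 + u * w * (x+z)^2 + v * w * (y+z)^2 \<le> u * (4/3 * x^2) + v * (4/3 * y^2) + w * (4/3 * z^2)"
proof -
  have "(u+v+w) * (u * (4/3 * x^2) + v * (4/3 * y^2) + w * (4/3 * z^2)) - (u * v * (x+y)^2 + u * w * (x+z)^2 + v * w * (y+z)^2)
     = (2/3) * ((u * x - v * y)^2 + (u * x - w * z)^2 + (v * y - w * z)^2) + (1/3) * (u * v * (x-y)^2 + u * w * (x-z)^2 + v * w * (y-z)^2)"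
    by (simp add: field_simps power2_eq_square)
  moreover have "(2/3) * ((u * x - v * y)^2 + (u * x - w * z)^2 + (v * y - w * z)^2) + (1/3) * (u * v * (x-y)^2 + u * w * (x-z)^2 + v * w * (y-z)^2) \<ge> 0"
    using assms by (intro add_nonneg_nonneg mult_nonneg_nonneg) auto
  ultimately show ?thesis using assms(4) by simp
qed

lemma tri:
  fixes c1 c2 c3 :: "real^2"
  assumes d12: "dist c1 c2 \<le> r1 + r2" and d13: "dist c1 c3 \<le> r1 + r3" and d23: "dist c2 c3 \<le> r2 + r3"
    and r: "r1 > 0" "r2 > 0" "r3 > 0"
  shows "\<exists>p. dist c1 p \<le> 2 / sqrt 3 * r1 \<and> dist c2 p \<le> 2 / sqrt 3 * r2 \<and> dist c3 p \<le> 2 / sqrt 3 * r3"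
proof -
  have sq: "inner (a - b) (a - b) \<le> (r + s)^2" if "dist a b \<le> r + s" for a b :: "real^2" and r s
  proof -
    have "inner (a - b) (a - b) = (dist a b)^2" by (simp add: dist_norm power2_norm_eq_inner)
    also have "... \<le> (r+s)^2" by (rule power_mono[OF that zero_le_dist])
    finally show ?thesis .
  qed
  have "\<exists>p. inner (p-c1) (p-c1) \<le> 4/3*r1^2 \<and> inner (p-c2) (p-c2) \<le> 4/3*r2^2 \<and> inner (p-c3) (p-c3) \<le> 4/3*r3^2"
  proof (rule common3)
    fix u v w :: real assume uvw: "u \<ge> 0" "v \<ge> 0" "w \<ge> 0" "u+v+w = 1"
    have "u * v * inner (c1-c2) (c1-c2) + u * w * inner (c1-c3) (c1-c3) + v * w * inner (c2-c3) (c2-c3)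
       \<le> u * v * (r1+r2)^2 + u * w * (r1+r3)^2 + v * w * (r2+r3)^2"
      using uvw by (intro add_mono mult_left_mono[OF sq[OF d12]] mult_left_mono[OF sq[OF d13]] mult_left_mono[OF sq[OF d23]] mult_nonneg_nonneg)
    also have "... \<le> u * (4/3*r1^2) + v * (4/3*r2^2) + w * (4/3*r3^2)" by (rule poly_ineq[OF uvw])
    finally show "Hfun c1 c2 c3 (inner c1 c1 - 4/3*r1^2) (inner c2 c2 - 4/3*r2^2) (inner c3 c3 - 4/3*r3^2) (u,v,w) \<le> 0"
      unfolding Hfun_eq[OF uvw(4)] by linarith
  qed
  then obtain p where p: "inner (p-c1) (p-c1) \<le> 4/3*r1^2" "inner (p-c2) (p-c2) \<le> 4/3*r2^2" "inner (p-c3) (p-c3) \<le> 4/3*r3^2"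
    by blast
  have k2: "(2 / sqrt 3)^2 = (4/3::real)" by (simp add: power_divide)
  have fin: "dist c p \<le> 2 / sqrt 3 * r" if "inner (p-c) (p-c) \<le> 4/3*r^2" "r > 0" for c and r :: real
  proof -
    have "(dist c p)^2 = inner (p-c) (p-c)"
      unfolding dist_norm norm_minus_commute[of c p] power2_norm_eq_inner by (rule refl)
    also have "... \<le> 4/3*r^2" by (rule that(1))
    also have "... = (2 / sqrt 3 * r)^2" unfolding power_mult_distrib k2 by simp
    finally have "(dist c p)^2 \<le> (2 / sqrt 3 * r)^2" .
    then show ?thesis by (rule power2_le_imp_le) (use that(2) in simp)
  qed
  show ?thesis using fin[OF p(1) r(1)] fin[OF p(2) r(2)] fin[OF p(3) r(3)] by blast
qed


lemma axis_facts:
  "inner (axis 1 1 :: real^2) (axis 1 1) = 1" "inner (axis 2 1 :: real^2) (axis 2 1) = 1"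
  "inner (axis 1 1 :: real^2) (axis 2 1) = 0" "inner (axis 2 1 :: real^2) (axis 1 1) = 0"
  by (simp_all add: inner_axis_axis)

theorem theorem6:
  shows "(\<forall>D::disk set. valid_disks D \<and> pairwise_intersecting D \<longrightarrow>
            has_common_point (scale_disk (2 / sqrt 3) ` D))
       \<and> (\<forall>lam::real. lam < 2 / sqrt 3 \<longrightarrow>
            (\<exists>D::disk set. finite D \<and> valid_disks D \<and> pairwise_intersecting D \<and>
               \<not> has_common_point (scale_disk lam ` D)))"
proof
  define k where "k = 2 / sqrt (3::real)"
  have kpos: "k > 0" unfolding k_def by simp
  have Fd: "disk_set (scale_disk k d) = cball (fst d) (k * snd d)" for d
    by (simp add: disk_set_def scale_disk_def)
  show "\<forall>D::disk set. valid_disks D \<and> pairwise_intersecting D \<longrightarrow>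
            has_common_point (scale_disk (2 / sqrt 3) ` D)"
  proof (intro allI impI)
    fix D :: "disk set" assume asm: "valid_disks D \<and> pairwise_intersecting D"
    define F where "F = disk_set ` scale_disk k ` D"
    have dd: "dist (fst d1) (fst d2) \<le> snd d1 + snd d2" if "d1 \<in> D" "d2 \<in> D" for d1 d2
    proof -
      have "disk_set d1 \<inter> disk_set d2 \<noteq> {}"
        using asm that unfolding pairwise_intersecting_def by simp
      then obtain x where "x \<in> disk_set d1" "x \<in> disk_set d2" by blast
      then have "dist (fst d1) x \<le> snd d1" "dist (fst d2) x \<le> snd d2" by (simp_all add: disk_set_def)
      then show ?thesis using dist_triangle[of "fst d1" "fst d2" x] by (simp add: dist_commute)
    qed
    have rp: "snd d > 0" if "d \<in> D" for d using asm that unfolding valid_disks_def by simp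
    have Fch: "\<exists>d\<in>D. X = cball (fst d) (k * snd d)" if "X \<in> F" for X
    proof -
      from that obtain d where "d \<in> D" "X = disk_set (scale_disk k d)" unfolding F_def by blast
      then show ?thesis using Fd by blast
    qed
    have T3: "A \<inter> B \<inter> C \<noteq> {}" if ABC: "A \<in> F" "B \<in> F" "C \<in> F" for A B C
    proof -
      obtain d1 d2 d3 where d: "d1 \<in> D" "d2 \<in> D" "d3 \<in> D" and
        A: "A = cball (fst d1) (k * snd d1)" and B: "B = cball (fst d2) (k * snd d2)" and
        C: "C = cball (fst d3) (k * snd d3)"
        using Fch[OF ABC(1)] Fch[OF ABC(2)] Fch[OF ABC(3)] by blast
      obtain p where "dist (fst d1) p \<le> 2 / sqrt 3 * snd d1" "dist (fst d2) p \<le> 2 / sqrt 3 * snd d2"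
          "dist (fst d3) p \<le> 2 / sqrt 3 * snd d3"
        using tri[OF dd[OF d(1,2)] dd[OF d(1,3)] dd[OF d(2,3)] rp[OF d(1)] rp[OF d(2)] rp[OF d(3)]] by blast
      then have "p \<in> A \<inter> B \<inter> C" unfolding A B C k_def by simp
      then show ?thesis by blast
    qed
    have finF: "\<Inter>F' \<noteq> {}" if "finite F'" "F' \<subseteq> F" for F'
    proof (cases "card F' \<ge> 3")
      case True
      show ?thesis
      proof (rule Helly)
        show "DIM(real^2) + 1 \<le> card F'" using True by simp
        show "\<forall>s\<in>F'. convex s" using that(2) Fch by fastforce
        fix t assume t: "t \<subseteq> F'" "card t = DIM(real^2) + 1"
        then have "card t = 3" by simp
        then obtain A B C where "t = {A, B, C}" by (auto simp: card_3_iff)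
        moreover have "A \<in> F" "B \<in> F" "C \<in> F" using t(1) that(2) calculation by auto
        ultimately show "\<Inter>t \<noteq> {}" using T3 by (simp add: Int_assoc)
      qed
    next
      case False
      then have "card F' = 0 \<or> card F' = 1 \<or> card F' = 2" by linarith
      then show ?thesis
      proof (elim disjE)
        assume "card F' = 0" then have "F' = {}" using that(1) by simp
        then show ?thesis by simp
      next
        assume "card F' = 1" then obtain A where "F' = {A}" by (auto simp: card_1_singleton_iff)
        then show ?thesis using T3[of A A A] that(2) by auto
      next
        assume "card F' = 2" then obtain A B where "F' = {A, B}" by (auto simp: card_2_iff)
        then show ?thesis using T3[of A B B] that(2) by auto
      qed
    qed
    show "has_common_point (scale_disk (2 / sqrt 3) ` D)"
    proof (cases "D = {}")
      case True then show ?thesis unfolding has_common_point_def by simp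
    next
      case False
      then obtain d0 where d0: "d0 \<in> D" by blast
      define S where "S = disk_set (scale_disk k d0)"
      have "compact S" unfolding S_def Fd by simp
      then have "S \<inter> \<Inter>F \<noteq> {}"
      proof (rule compact_imp_fip)
        show "closed T" if "T \<in> F" for T using Fch[OF that] by auto
        show "S \<inter> \<Inter>F' \<noteq> {}" if "finite F'" "F' \<subseteq> F" for F'
        proof -
          have "S \<in> F" unfolding S_def F_def using d0 by blast
          then have "\<Inter>(insert S F') \<noteq> {}" using finF[of "insert S F'"] that by auto
          then show ?thesis by simp
        qed
      qed
      then obtain p where "p \<in> \<Inter>F" by blast
      then show ?thesis unfolding has_common_point_def F_def k_def by blast
    qed
  qed
  show "\<forall>lam::real. lam < 2 / sqrt 3 \<longrightarrow>
            (\<exists>D::disk set. finite D \<and> valid_disks D \<and> pairwise_intersecting D \<and>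
               \<not> has_common_point (scale_disk lam ` D))"
  proof (intro allI impI)
    fix lam :: real assume lam: "lam < 2 / sqrt 3"
    define s where "s = sqrt (3::real)"
    have s2: "s * s = 3" unfolding s_def by simp
    have spos: "s > 0" unfolding s_def by simp
    define e1 :: "real^2" where "e1 = axis 1 1"
    define e2 :: "real^2" where "e2 = axis 2 1"
    have ee: "inner e1 e1 = 1" "inner e2 e2 = 1" "inner e1 e2 = 0" "inner e2 e1 = 0"
      unfolding e1_def e2_def using axis_facts by auto
    define c1 where "c1 = (2/s) *\<^sub>R e2"
    define c2 where "c2 = e1 - (1/s) *\<^sub>R e2"
    define c3 where "c3 = - e1 - (1/s) *\<^sub>R e2"
    have sn: "s \<noteq> 0" using spos by auto
    have "c1 + c2 + c3 = (2/s - 1/s - 1/s) *\<^sub>R e2" unfolding c1_def c2_def c3_def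
      by (simp only: scaleR_left_diff_distrib) simp
    also have "2/s - 1/s - 1/s = 0" by (simp add: diff_divide_distrib[symmetric])
    finally have sum0: "c1 + c2 + c3 = 0" by simp
    have "inner c1 c1 = (2/s)*(2/s)" unfolding c1_def using ee by simp
    also have "... = 4/3" using s2 sn by (simp add: field_simps)
    finally have n1: "inner c1 c1 = 4/3" .
    have "inner c2 c2 = 1 + (1/s)*(1/s)" unfolding c2_def using ee by (simp add: inner_diff_left inner_diff_right)
    also have "... = 4/3" using s2 sn by (simp add: field_simps)
    finally have n2: "inner c2 c2 = 4/3" .
    have "inner c3 c3 = 1 + (1/s)*(1/s)" unfolding c3_def using ee by (simp add: inner_diff_left inner_diff_right)
    also have "... = 4/3" using s2 sn by (simp add: field_simps)
    finally have n3: "inner c3 c3 = 4/3" .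
    have "inner c1 c2 = - (2/s)*(1/s)" unfolding c1_def c2_def using ee by (simp add: inner_diff_left inner_diff_right)
    also have "... = -2/3" using s2 sn by (simp add: field_simps)
    finally have i12: "inner c1 c2 = -2/3" .
    have "inner c1 c3 = - (2/s)*(1/s)" unfolding c1_def c3_def using ee by (simp add: inner_diff_left inner_diff_right)
    also have "... = -2/3" using s2 sn by (simp add: field_simps)
    finally have i13: "inner c1 c3 = -2/3" .
    have "inner c2 c3 = -1 + (1/s)*(1/s)" unfolding c2_def c3_def using ee by (simp add: inner_diff_left inner_diff_right)
    also have "... = -2/3" using s2 sn by (simp add: field_simps)
    finally have i23: "inner c2 c3 = -2/3" .
    have dl: "dist a b \<le> 2" if "inner a a = 4/3" "inner b b = 4/3" "inner a b = -2/3" for a b :: "real^2"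
    proof -
      have "(dist a b)^2 = inner (a - b) (a - b)" by (simp add: dist_norm power2_norm_eq_inner)
      also have "... = 4" using that by (simp add: inner_diff_left inner_diff_right inner_commute)
      finally have "(dist a b)^2 \<le> 2^2" by simp
      then show ?thesis by (rule power2_le_imp_le) simp
    qed
    define D :: "disk set" where "D = {(c1, 1), (c2, 1), (c3, 1)}"
    have dD: "dist (fst d1) (fst d2) \<le> 2" if "d1 \<in> D" "d2 \<in> D" for d1 d2
    proof -
      have l: "dist c1 c2 \<le> 2" "dist c1 c3 \<le> 2" "dist c2 c3 \<le> 2"
        using dl[OF n1 n2 i12] dl[OF n1 n3 i13] dl[OF n2 n3 i23] by auto
      then have l': "dist c2 c1 \<le> 2" "dist c3 c1 \<le> 2" "dist c3 c2 \<le> 2"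
        by (simp_all only: dist_commute)
      from that have "d1 = (c1,1) \<or> d1 = (c2,1) \<or> d1 = (c3,1)" "d2 = (c1,1) \<or> d2 = (c2,1) \<or> d2 = (c3,1)"
        unfolding D_def by auto
      then show ?thesis using l l' by (elim disjE) simp_all
    qed
    have pw: "pairwise_intersecting D"
      unfolding pairwise_intersecting_def
    proof (intro ballI)
      fix d1 d2 assume d: "d1 \<in> D" "d2 \<in> D"
      have "snd d1 = 1" "snd d2 = 1" using d unfolding D_def by auto
      moreover have "dist (fst d1) (midpoint (fst d1) (fst d2)) \<le> 1" "dist (fst d2) (midpoint (fst d1) (fst d2)) \<le> 1"
        using dD[OF d] by (simp_all add: dist_midpoint)
      ultimately have "midpoint (fst d1) (fst d2) \<in> disk_set d1 \<inter> disk_set d2" by (simp add: disk_set_def)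
      then show "disk_set d1 \<inter> disk_set d2 \<noteq> {}" by blast
    qed
    have nc: "\<not> has_common_point (scale_disk lam ` D)"
    proof
      assume "has_common_point (scale_disk lam ` D)"
      then obtain p where "\<forall>d\<in>D. p \<in> disk_set (scale_disk lam d)" unfolding has_common_point_def by blast
      then have p: "dist c1 p \<le> lam" "dist c2 p \<le> lam" "dist c3 p \<le> lam"
        unfolding D_def by (auto simp: disk_set_def scale_disk_def)
      have l0: "lam \<ge> 0" using p(1) zero_le_dist[of c1 p] by linarith
      have "lam^2 < (2 / sqrt 3)^2" by (rule power_strict_mono[OF lam l0]) simp
      then have l2: "lam^2 < 4/3" by (simp add: power_divide)
      have sqd: "inner (p - c) (p - c) \<le> lam^2" if "dist c p \<le> lam" for c
      proof -
        have "inner (p - c) (p - c) = (dist c p)^2"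
          unfolding dist_norm norm_minus_commute[of c p] power2_norm_eq_inner by (rule refl)
        also have "... \<le> lam^2" by (rule power_mono[OF that zero_le_dist])
        finally show ?thesis .
      qed
      have "inner (p - c1) (p - c1) + inner (p - c2) (p - c2) + inner (p - c3) (p - c3)
          = 3 * inner p p - 2 * inner p (c1 + c2 + c3) + (inner c1 c1 + inner c2 c2 + inner c3 c3)"
        by (simp add: inner_diff_left inner_diff_right inner_add_right inner_commute algebra_simps)
      also have "... = 3 * inner p p + 4" using sum0 n1 n2 n3 by simp
      finally have "inner (p - c1) (p - c1) + inner (p - c2) (p - c2) + inner (p - c3) (p - c3) \<ge> 4"
        by simp
      with sqd[OF p(1)] sqd[OF p(2)] sqd[OF p(3)] l2 show False by linarith
    qed
    have "finite D" unfolding D_def by simp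
    moreover have "valid_disks D" unfolding D_def valid_disks_def by auto
    ultimately show "\<exists>D::disk set. finite D \<and> valid_disks D \<and> pairwise_intersecting D \<and>
               \<not> has_common_point (scale_disk lam ` D)" using pw nc by blast
  qed
qed

end
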